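(* Let $X$ be a compact metric space and let $F:\mathscr{K}(X)\to\mathscr{K}(X)$ be a continuous monotone map. If $X$ is an attractor of $F$, then $X$ is asymptotically stable. In particular, if $X$ is a strict attractor of a finite family $\mathscr{F}$ of continuous maps of $X$ (i.e. of its Hutchinson operator), then $X$ is asymptotically stable for the Hutchinson operator.
   Context: $\mathscr{K}(X)$ is the set of nonempty compact subsets of $X$ with the Hausdorff distance $\mathrm{d_H}$. $F$ is monotone if $A\subset B$ implies $F(A)\subset F(B)$. $K\in\mathscr{K}(X)$ is an attractor of $F$ if there is an open set $\mathcal{U}\subset\mathscr{K}(X)$ containing $K$ with $F^n(C)\to K$ in $\mathrm{d_H}$ for every $C\in\mathcal{U}$. An attractor $K$ is asymptotically stable if moreover for every $\varepsilon>0$ there is $\delta>0$ such that $\mathrm{d_H}(F^n(S),K)<\varepsilon$ for all $n\geq0$ and all $S\in\mathscr{K}(X)$ with $\mathrm{d_H}(S,K)<\delta$. The Hutchinson operator of $\mathscr{F}=\{f_1,\dots,f_k\}$ is $F(A)=\bigcup_i f_i(A)$. $K$ is a strict attractor if there is an open $U\subset X$ with $K\subset U$ and $F^n(S)\to K$ for all nonempty compact $S\subset U$. *)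

theory Defs
  imports "HOL-Analysis.Analysis"
begin

text \<open>Hausdorff distance between sets of a metric space (only used for nonempty
  compact sets, where it is the usual Hausdorff distance).\<close>
definition hausdorff_dist :: "'a::metric_space set \<Rightarrow> 'a set \<Rightarrow> real" where
  "hausdorff_dist A B = max (SUP a\<in>A. infdist a B) (SUP b\<in>B. infdist b A)"

definition KX :: "'a::metric_space set \<Rightarrow> 'a set set" where
  "KX X = {S. S \<subseteq> X \<and> compact S \<and> S \<noteq> {}}"

definition KX_open :: "'a::metric_space set \<Rightarrow> 'a set set \<Rightarrow> bool" where
  "KX_open X U \<longleftrightarrow> U \<subseteq> KX X \<and>
     (\<forall>S\<in>U. \<exists>e>0. \<forall>T\<in>KX X. hausdorff_dist T S < e \<longrightarrow> T \<in> U)"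

definition KX_map :: "'a::metric_space set \<Rightarrow> ('a set \<Rightarrow> 'a set) \<Rightarrow> bool" where
  "KX_map X F \<longleftrightarrow> (\<forall>S\<in>KX X. F S \<in> KX X)"

definition KX_continuous :: "'a::metric_space set \<Rightarrow> ('a set \<Rightarrow> 'a set) \<Rightarrow> bool" where
  "KX_continuous X F \<longleftrightarrow> (\<forall>S\<in>KX X. \<forall>e>0. \<exists>d>0. \<forall>T\<in>KX X.
      hausdorff_dist T S < d \<longrightarrow> hausdorff_dist (F T) (F S) < e)"

definition KX_monotone :: "'a::metric_space set \<Rightarrow> ('a set \<Rightarrow> 'a set) \<Rightarrow> bool" where
  "KX_monotone X F \<longleftrightarrow> (\<forall>A\<in>KX X. \<forall>B\<in>KX X. A \<subseteq> B \<longrightarrow> F A \<subseteq> F B)"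

definition attractor :: "'a::metric_space set \<Rightarrow> ('a set \<Rightarrow> 'a set) \<Rightarrow> 'a set \<Rightarrow> bool" where
  "attractor X F K \<longleftrightarrow> K \<in> KX X \<and>
     (\<exists>U. KX_open X U \<and> K \<in> U \<and>
        (\<forall>C\<in>U. (\<lambda>n. hausdorff_dist ((F ^^ n) C) K) \<longlonglongrightarrow> 0))"

definition asymptotically_stable :: "'a::metric_space set \<Rightarrow> ('a set \<Rightarrow> 'a set) \<Rightarrow> 'a set \<Rightarrow> bool" where
  "asymptotically_stable X F K \<longleftrightarrow> attractor X F K \<and>
     (\<forall>\<epsilon>>0. \<exists>\<delta>>0. \<forall>n::nat. \<forall>S\<in>KX X.
        hausdorff_dist S K < \<delta> \<longrightarrow> hausdorff_dist ((F ^^ n) S) K < \<epsilon>)"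

definition hutchinson :: "('a \<Rightarrow> 'a) set \<Rightarrow> 'a set \<Rightarrow> 'a set" where
  "hutchinson Fs A = (\<Union>f\<in>Fs. f ` A)"

definition strict_attractor :: "'a::metric_space set \<Rightarrow> ('a set \<Rightarrow> 'a set) \<Rightarrow> 'a set \<Rightarrow> bool" where
  "strict_attractor X F K \<longleftrightarrow> K \<in> KX X \<and>
     (\<exists>U. openin (top_of_set X) U \<and> K \<subseteq> U \<and>
        (\<forall>S. S \<subseteq> U \<and> compact S \<and> S \<noteq> {} \<longrightarrow>
             (\<lambda>n. hausdorff_dist ((F ^^ n) S) K) \<longlonglongrightarrow> 0))"

end

theory Submission
  imports Defs
begin


lemma sup_attained:
  fixes f :: "'a::metric_space \<Rightarrow> real"
  assumes "compact A" "A \<noteq> {}" "continuous_on A f"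
  obtains x where "x \<in> A" "(SUP a\<in>A. f a) = f x" "\<And>y. y \<in> A \<Longrightarrow> f y \<le> f x"
proof -
  obtain x where x: "x \<in> A" "\<And>y. y \<in> A \<Longrightarrow> f y \<le> f x"
    using continuous_attains_sup[OF assms] by blast
  have "(SUP a\<in>A. f a) = f x"
    by (rule cSup_eq_maximum) (use x in auto)
  then show ?thesis using that x by blast
qed

lemma cont_infdist: "continuous_on A (\<lambda>a. infdist a B)"
  by (intro continuous_at_imp_continuous_on ballI continuous_infdist continuous_ident)

lemma hd_lt:
  assumes "compact A" "A \<noteq> {}" "compact B" "B \<noteq> {}"
  shows "hausdorff_dist A B < c \<longleftrightarrow> (\<forall>a\<in>A. infdist a B < c) \<and> (\<forall>b\<in>B. infdist b A < c)"
proof -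
  obtain x where x: "x \<in> A" "(SUP a\<in>A. infdist a B) = infdist x B" "\<And>y. y \<in> A \<Longrightarrow> infdist y B \<le> infdist x B"
    using sup_attained[OF assms(1,2) cont_infdist] by metis
  obtain z where z: "z \<in> B" "(SUP a\<in>B. infdist a A) = infdist z A" "\<And>y. y \<in> B \<Longrightarrow> infdist y A \<le> infdist z A"
    using sup_attained[OF assms(3,4) cont_infdist] by metis
  have 1: "infdist x B < c \<longleftrightarrow> (\<forall>a\<in>A. infdist a B < c)" using x(1,3) by (meson le_less_trans)
  have 2: "infdist z A < c \<longleftrightarrow> (\<forall>a\<in>B. infdist a A < c)" using z(1,3) by (meson le_less_trans)
  show ?thesis unfolding hausdorff_dist_def x(2) z(2) max_less_iff_conj 1 2 by (rule refl)
qed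

lemma hd_le:
  assumes "compact A" "A \<noteq> {}" "compact B" "B \<noteq> {}"
  shows "hausdorff_dist A B \<le> c \<longleftrightarrow> (\<forall>a\<in>A. infdist a B \<le> c) \<and> (\<forall>b\<in>B. infdist b A \<le> c)"
proof -
  obtain x where x: "x \<in> A" "(SUP a\<in>A. infdist a B) = infdist x B" "\<And>y. y \<in> A \<Longrightarrow> infdist y B \<le> infdist x B"
    using sup_attained[OF assms(1,2) cont_infdist] by metis
  obtain z where z: "z \<in> B" "(SUP a\<in>B. infdist a A) = infdist z A" "\<And>y. y \<in> B \<Longrightarrow> infdist y A \<le> infdist z A"
    using sup_attained[OF assms(3,4) cont_infdist] by metis
  have 1: "infdist x B \<le> c \<longleftrightarrow> (\<forall>a\<in>A. infdist a B \<le> c)" using x(1,3) by (meson order_trans)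
  have 2: "infdist z A \<le> c \<longleftrightarrow> (\<forall>a\<in>B. infdist a A \<le> c)" using z(1,3) by (meson order_trans)
  show ?thesis unfolding hausdorff_dist_def x(2) z(2) max.bounded_iff 1 2 by (rule refl)
qed

lemma hd_sym: "hausdorff_dist A B = hausdorff_dist B A"
  unfolding hausdorff_dist_def by (simp add: max.commute)

lemma hd_nonneg:
  assumes "compact A" "A \<noteq> {}" "compact B" "B \<noteq> {}"
  shows "0 \<le> hausdorff_dist A B"
proof -
  obtain a where "a \<in> A" using assms by blast
  have "\<not> hausdorff_dist A B < 0" using hd_lt[OF assms, of 0] infdist_nonneg \<open>a \<in> A\<close>
    by (metis not_less)
  then show ?thesis by simp
qed

lemma infdist_le_hd:
  assumes "compact A" "A \<noteq> {}" "compact B" "B \<noteq> {}" "b \<in> B"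
  shows "infdist b A \<le> hausdorff_dist A B"
  using hd_le[OF assms(1-4), of "hausdorff_dist A B"] assms(5) by simp

lemma infdist_attained:
  assumes "compact B" "B \<noteq> {}"
  obtains b where "b \<in> B" "infdist x B = dist x b"
proof -
  have c: "continuous_on B (dist x)"
    by (intro continuous_on_dist continuous_on_const continuous_on_id)
  obtain b where b: "b \<in> B" "\<And>y. y \<in> B \<Longrightarrow> dist x b \<le> dist x y"
    using continuous_attains_inf[OF assms c] by blast
  have "infdist x B = dist x b"
    unfolding infdist_notempty[OF assms(2)]
    by (rule cInf_eq_minimum) (use b in auto)
  then show ?thesis using that b by blast
qed

lemma infdist_hd:
  assumes "compact A" "A \<noteq> {}" "compact B" "B \<noteq> {}"
  shows "infdist x A \<le> infdist x B + hausdorff_dist A B"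
proof -
  obtain b where b: "b \<in> B" "infdist x B = dist x b" using infdist_attained[OF assms(3,4)] by blast
  have "infdist x A \<le> infdist b A + dist x b" by (rule infdist_triangle)
  moreover have "infdist b A \<le> hausdorff_dist A B"
    using infdist_le_hd[OF assms b(1)] .
  ultimately show ?thesis using b(2) by linarith
qed

lemma infdist_lessE:
  assumes "infdist x A < e" "A \<noteq> {}"
  obtains a where "a \<in> A" "dist x a < e"
proof -
  have bb: "bdd_below ((dist x) ` A)" by (rule bdd_belowI[of _ 0]) auto
  have "(INF a\<in>A. dist x a) < e" using assms(1) unfolding infdist_notempty[OF assms(2)] .
  then have "\<exists>a\<in>A. dist x a < e" using cINF_less_iff[OF assms(2) bb] by blast
  then show ?thesis using that by blast
qed



lemma KXD: "S \<in> KX X \<Longrightarrow> compact S \<and> S \<noteq> {} \<and> S \<subseteq> X"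
  unfolding KX_def by blast

lemma iter_KX: "KX_map X F \<Longrightarrow> S \<in> KX X \<Longrightarrow> (F ^^ n) S \<in> KX X"
proof (induction n)
  case 0 then show ?case by simp
next
  case (Suc n) then show ?case unfolding KX_map_def by simp
qed

lemma iter_mono:
  assumes "KX_map X F" "KX_monotone X F" "A \<in> KX X" "B \<in> KX X" "A \<subseteq> B"
  shows "(F ^^ n) A \<subseteq> (F ^^ n) B"
proof (induction n)
  case 0 then show ?case using assms(5) by simp
next
  case (Suc n)
  have a: "(F ^^ n) A \<in> KX X" and b: "(F ^^ n) B \<in> KX X"
    using iter_KX[OF assms(1)] assms(3,4) by blast+
  have "F ((F ^^ n) A) \<subseteq> F ((F ^^ n) B)"
    using assms(2) a b Suc.IH unfolding KX_monotone_def by blast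
  then show ?case by simp
qed

lemma iter_cont:
  assumes "KX_map X F" "KX_continuous X F" "S \<in> KX X" "e > 0"
  shows "\<exists>d>0. \<forall>T\<in>KX X. hausdorff_dist T S < d \<longrightarrow> hausdorff_dist ((F ^^ n) T) ((F ^^ n) S) < e"
  using assms(4)
proof (induction n arbitrary: e)
  case 0
  then show ?case by auto
next
  case (Suc n)
  have SK: "(F ^^ n) S \<in> KX X" using iter_KX assms(1,3) by blast
  obtain d1 where d1: "d1 > 0" "\<And>T. T\<in>KX X \<Longrightarrow> hausdorff_dist T ((F ^^ n) S) < d1 \<Longrightarrow> hausdorff_dist (F T) (F ((F ^^ n) S)) < e"
    using assms(2) SK Suc.prems unfolding KX_continuous_def by meson
  obtain d where d: "d > 0" "\<And>T. T\<in>KX X \<Longrightarrow> hausdorff_dist T S < d \<Longrightarrow> hausdorff_dist ((F ^^ n) T) ((F ^^ n) S) < d1"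
    using Suc.IH[OF d1(1)] by blast
  show ?case
  proof (intro exI[of _ d] conjI ballI impI)
    fix T assume T: "T \<in> KX X" "hausdorff_dist T S < d"
    have "(F ^^ n) T \<in> KX X" using iter_KX assms(1) T(1) by blast
    then have "hausdorff_dist (F ((F ^^ n) T)) (F ((F ^^ n) S)) < e"
      using d1(2) d(2)[OF T] by blast
    then show "hausdorff_dist ((F ^^ Suc n) T) ((F ^^ Suc n) S) < e" by simp
  qed (use d in simp)
qed

lemma hdX_le:
  assumes "compact X" "S \<in> KX X" "c \<ge> 0"
  shows "hausdorff_dist S X \<le> c \<longleftrightarrow> (\<forall>x\<in>X. infdist x S \<le> c)"
proof -
  have S: "compact S" "S \<noteq> {}" "S \<subseteq> X" using KXD[OF assms(2)] by auto
  then have X: "X \<noteq> {}" by auto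
  have "\<forall>a\<in>S. infdist a X \<le> c" using S(3) assms(3) by auto
  then show ?thesis using hd_le[OF S(1,2) assms(1) X, of c] by blast
qed

lemma hdX_lt:
  assumes "compact X" "S \<in> KX X" "c > 0"
  shows "hausdorff_dist S X < c \<longleftrightarrow> (\<forall>x\<in>X. infdist x S < c)"
proof -
  have S: "compact S" "S \<noteq> {}" "S \<subseteq> X" using KXD[OF assms(2)] by auto
  then have X: "X \<noteq> {}" by auto
  have "\<forall>a\<in>S. infdist a X < c" using S(3) assms(3) by auto
  then show ?thesis using hd_lt[OF S(1,2) assms(1) X, of c] by blast
qed

lemma FX_eq:
  assumes "compact X" "KX_map X F" "KX_monotone X F" "attractor X F X"
  shows "F X = X"
proof (rule ccontr)
  assume ne: "F X \<noteq> X"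
  have XK: "X \<in> KX X" using assms(4) by (simp add: attractor_def)
  have FXK: "F X \<in> KX X" using assms(2) XK by (simp add: KX_map_def)
  then obtain x where x: "x \<in> X" "x \<notin> F X" using ne KXD by blast
  have c: "infdist x (F X) > 0"
    using infdist_pos_not_in_closed[of "F X" x] KXD[OF FXK] compact_imp_closed x by blast
  have sub: "(F ^^ Suc n) X \<subseteq> F X" for n
  proof -
    have "(F ^^ n) X \<in> KX X" by (rule iter_KX[OF assms(2) XK])
    then have "F ((F ^^ n) X) \<subseteq> F X"
      using assms(3) XK KXD unfolding KX_monotone_def by blast
    then show ?thesis by simp
  qed
  have big: "\<not> hausdorff_dist ((F ^^ Suc n) X) X < infdist x (F X)" for n
  proof
    assume "hausdorff_dist ((F ^^ Suc n) X) X < infdist x (F X)"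
    then have "infdist x ((F ^^ Suc n) X) < infdist x (F X)"
      using hdX_lt[OF assms(1) iter_KX[OF assms(2) XK] c] x by blast
    moreover have "infdist x (F X) \<le> infdist x ((F ^^ Suc n) X)"
      by (rule infdist_mono[OF sub]) (use iter_KX[OF assms(2) XK] KXD in blast)
    ultimately show False by simp
  qed
  obtain U where U: "X \<in> U" "\<forall>C\<in>U. (\<lambda>n. hausdorff_dist ((F ^^ n) C) X) \<longlonglongrightarrow> 0"
    using assms(4) by (auto simp: attractor_def)
  then have "\<forall>\<^sub>F n in sequentially. hausdorff_dist ((F ^^ n) X) X < infdist x (F X)"
    using order_tendstoD(2)[OF _ c] by blast
  then obtain N where N: "\<And>n. n \<ge> N \<Longrightarrow> hausdorff_dist ((F ^^ n) X) X < infdist x (F X)"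
    by (auto simp: eventually_sequentially)
  have "hausdorff_dist ((F ^^ Suc N) X) X < infdist x (F X)" by (rule N) simp
  then show False using big[of N] by blast
qed

lemma head:
  assumes "compact X" "KX_map X F" "KX_continuous X F" "KX_monotone X F" "attractor X F X" "e > 0"
  shows "\<exists>d>0. \<forall>n<N. \<forall>S\<in>KX X. hausdorff_dist S X < d \<longrightarrow> hausdorff_dist ((F ^^ n) S) X < e"
proof (induction N)
  case 0
  then show ?case by (auto intro: exI[of _ 1])
next
  case (Suc N)
  then obtain d1 where d1: "d1 > 0" "\<forall>n<N. \<forall>S\<in>KX X. hausdorff_dist S X < d1 \<longrightarrow> hausdorff_dist ((F ^^ n) S) X < e"
    by blast
  have XK: "X \<in> KX X" using assms(5) by (simp add: attractor_def)
  have FnX: "(F ^^ n) X = X" for n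
    by (induction n) (use FX_eq[OF assms(1,2,4,5)] in auto)
  obtain d2 where d2: "d2 > 0" "\<forall>T\<in>KX X. hausdorff_dist T X < d2 \<longrightarrow> hausdorff_dist ((F ^^ N) T) ((F ^^ N) X) < e"
    using iter_cont[OF assms(2,3) XK assms(6)] by blast
  show ?case
  proof (intro exI[of _ "min d1 d2"] conjI allI impI ballI)
    show "min d1 d2 > 0" using d1 d2 by simp
    fix n S assume n: "n < Suc N" and S: "S \<in> KX X" and h: "hausdorff_dist S X < min d1 d2"
    show "hausdorff_dist ((F ^^ n) S) X < e"
    proof (cases "n < N")
      case True
      then show ?thesis using d1 S h by auto
    next
      case False
      then have "n = N" using n by simp
      then show ?thesis using d2(2) S h FnX[of N] by auto
    qed
  qed
qed



lemma finite_hd_lt: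
  assumes "finite P" "P \<noteq> {}" "\<And>p. p \<in> P \<Longrightarrow> dist (s p) (t p) < d"
  shows "hausdorff_dist (t ` P) (s ` P) < d"
proof -
  have c: "compact (t ` P)" "t ` P \<noteq> {}" "compact (s ` P)" "s ` P \<noteq> {}"
    using assms(1,2) by (auto intro: finite_imp_compact)
  have 1: "\<forall>a\<in>t ` P. infdist a (s ` P) < d"
  proof
    fix a assume "a \<in> t ` P"
    then obtain p where p: "p \<in> P" "a = t p" by blast
    have "infdist a (s ` P) \<le> dist a (s p)" using p by (intro infdist_le) auto
    then show "infdist a (s ` P) < d" using assms(3)[OF p(1)] p(2) by (simp add: dist_commute)
  qed
  have 2: "\<forall>a\<in>s ` P. infdist a (t ` P) < d"
  proof
    fix a assume "a \<in> s ` P"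
    then obtain p where p: "p \<in> P" "a = s p" by blast
    have "infdist a (t ` P) \<le> dist a (t p)" using p by (intro infdist_le) auto
    then show "infdist a (t ` P) < d" using assms(3)[OF p(1)] p(2) by simp
  qed
  show ?thesis using hd_lt[OF c] 1 2 by blast
qed

lemma tail:
  assumes X: "compact X" "X \<noteq> {}" and F: "KX_map X F" "KX_continuous X F" "KX_monotone X F"
    and att: "attractor X F X" and e: "e > 0"
  shows "\<exists>N. \<exists>d>0. \<forall>S\<in>KX X. hausdorff_dist S X < d \<longrightarrow> (\<forall>n\<ge>N. hausdorff_dist ((F ^^ n) S) X \<le> e)"
proof -
  obtain U where U: "KX_open X U" "X \<in> U" "\<And>C. C\<in>U \<Longrightarrow> (\<lambda>n. hausdorff_dist ((F ^^ n) C) X) \<longlonglongrightarrow> 0"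
    using att by (auto simp: attractor_def)
  obtain r where r: "r > 0" "\<And>T. T\<in>KX X \<Longrightarrow> hausdorff_dist T X < r \<Longrightarrow> T \<in> U"
    using U(1,2) unfolding KX_open_def by blast
  define \<eta> where "\<eta> = r / 2"
  have \<eta>: "\<eta> > 0" using r by (simp add: \<eta>_def)
  obtain P where P: "P \<subseteq> X" "finite P" "X \<subseteq> (\<Union>p\<in>P. ball p \<eta>)"
    using compactE_image[OF X(1), of X "\<lambda>p. ball p \<eta>"] \<eta> by (metis open_ball UN_I centre_in_ball subsetI)
  have Pne: "P \<noteq> {}" using P(3) X(2) by auto
  define Y where "Y = product_topology (\<lambda>p. top_of_set (X \<inter> ball p \<eta>)) P"
  have topY: "topspace Y = PiE P (\<lambda>p. X \<inter> ball p \<eta>)" by (simp add: Y_def)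
  define Q where "Q N = {s \<in> topspace Y. \<forall>n\<ge>N. hausdorff_dist ((F ^^ n) (s ` P)) X \<le> e}" for N
  have sK: "s ` P \<in> KX X" if "s \<in> topspace Y" for s
    using that Pne P(2) unfolding topY KX_def by (auto intro: finite_imp_compact simp: PiE_def Pi_def)
  have sU: "s ` P \<in> U" if "s \<in> topspace Y" for s
  proof (rule r(2)[OF sK[OF that]])
    show "hausdorff_dist (s ` P) X < r"
      unfolding hdX_lt[OF X(1) sK[OF that] r(1)]
    proof
      fix x assume "x \<in> X"
      then obtain p where p: "p \<in> P" "dist p x < \<eta>" using P(3) by auto
      have "s p \<in> ball p \<eta>" using that p(1) unfolding topY by (auto simp: PiE_def Pi_def)
      then have "dist x (s p) < r" using p(2) dist_triangle[of x "s p" p] unfolding \<eta>_def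
        by (simp add: dist_commute)
      moreover have "infdist x (s ` P) \<le> dist x (s p)" using p(1) by (intro infdist_le) auto
      ultimately show "infdist x (s ` P) < r" by linarith
    qed
  qed
  have cover: "\<Union>(range Q) = topspace Y"
  proof
    show "\<Union>(range Q) \<subseteq> topspace Y" unfolding Q_def by auto
    show "topspace Y \<subseteq> \<Union>(range Q)"
    proof
      fix s assume s: "s \<in> topspace Y"
      have "\<forall>\<^sub>F n in sequentially. hausdorff_dist ((F ^^ n) (s ` P)) X < e"
        using order_tendstoD(2)[OF U(3)[OF sU[OF s]] e] .
      then obtain N where "\<And>n. n \<ge> N \<Longrightarrow> hausdorff_dist ((F ^^ n) (s ` P)) X < e"
        by (auto simp: eventually_sequentially)
      then have "s \<in> Q N" unfolding Q_def using s by (auto intro: less_imp_le)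
      then show "s \<in> \<Union>(range Q)" by blast
    qed
  qed
  have closedQ: "closedin Y (Q N)" for N
    unfolding closedin_def
  proof
    show "Q N \<subseteq> topspace Y" unfolding Q_def by auto
    show "openin Y (topspace Y - Q N)"
    proof (subst openin_subopen, intro ballI)
      fix s assume s: "s \<in> topspace Y - Q N"
      then obtain n where n: "n \<ge> N" "\<not> hausdorff_dist ((F ^^ n) (s ` P)) X \<le> e"
        unfolding Q_def by auto
      define A where "A = (F ^^ n) (s ` P)"
      have AK: "A \<in> KX X" unfolding A_def using iter_KX[OF F(1) sK] s by blast
      obtain x where x: "x \<in> X" "infdist x A > e"
        using n(2) hdX_le[OF X(1) AK, of e] e unfolding A_def by force
      define c where "c = infdist x A - e"
      have c: "c > 0" using x by (simp add: c_def)
      obtain d where d: "d > 0" "\<forall>T\<in>KX X. hausdorff_dist T (s ` P) < d \<longrightarrow> hausdorff_dist ((F ^^ n) T) A < c"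
        using iter_cont[OF F(1,2) sK c, of s n] s unfolding A_def by blast
      define T where "T = PiE P (\<lambda>p. X \<inter> ball p \<eta> \<inter> ball (s p) d)"
      have "openin Y T" unfolding Y_def T_def openin_PiE_gen
        using P(2) by (intro disjI2 conjI ballI openin_open_Int open_ball) (auto intro: finite_subset)
      moreover have "s \<in> T" using s d(1) unfolding T_def topY by (auto simp: PiE_def Pi_def)
      moreover have "T \<subseteq> topspace Y - Q N"
      proof
        fix t assume t: "t \<in> T"
        then have tY: "t \<in> topspace Y" unfolding T_def topY by (auto simp: PiE_def Pi_def)
        have "hausdorff_dist (t ` P) (s ` P) < d"
          using t unfolding T_def by (intro finite_hd_lt P(2) Pne) (auto simp: PiE_def Pi_def)
        then have h: "hausdorff_dist ((F ^^ n) (t ` P)) A < c" using d(2) sK[OF tY] by blast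
        have BK: "(F ^^ n) (t ` P) \<in> KX X" using iter_KX[OF F(1) sK[OF tY]] .
        have "infdist x A \<le> infdist x ((F ^^ n) (t ` P)) + hausdorff_dist A ((F ^^ n) (t ` P))"
          using infdist_hd KXD[OF AK] KXD[OF BK] by blast
        then have "infdist x ((F ^^ n) (t ` P)) > e" using h by (simp add: hd_sym c_def)
        then have "\<not> hausdorff_dist ((F ^^ n) (t ` P)) X \<le> e"
          using hdX_le[OF X(1) BK, of e] e x(1) by force
        then show "t \<in> topspace Y - Q N" using tY n(1) unfolding Q_def by auto
      qed
      ultimately show "\<exists>T. openin Y T \<and> s \<in> T \<and> T \<subseteq> topspace Y - Q N" by blast
    qed
  qed
  have fac_reg: "regular_space (top_of_set A)" for A :: "'a set"
    by (intro metrizable_imp_regular_space metrizable_space_subtopology metrizable_space_euclidean)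
  have fac_lc: "locally_compact_space (top_of_set (X \<inter> ball p \<eta>))" for p
  proof -
    have "locally_compact_space (subtopology (top_of_set X) (X \<inter> ball p \<eta>))"
    proof (rule locally_compact_space_open_subset)
      show "Hausdorff_space (top_of_set X) \<or> regular_space (top_of_set X)" using fac_reg by blast
      show "locally_compact_space (top_of_set X)"
        using X(1) by (intro compact_imp_locally_compact_space compact_space_subtopology) simp
      show "openin (top_of_set X) (X \<inter> ball p \<eta>)" by (intro openin_open_Int) simp
    qed
    then show ?thesis by (simp add: subtopology_subtopology)
  qed
  have lc: "locally_compact_space Y \<and> regular_space Y"
    unfolding Y_def locally_compact_space_product_topology regular_space_product_topology
    using fac_lc fac_reg P(2) by auto
  have "\<exists>N. Y interior_of Q N \<noteq> {}"
  proof (rule ccontr)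
    assume "\<not> ?thesis"
    then have "Y interior_of \<Union>(range Q) = {}"
      by (intro Baire_category_alt) (use lc closedQ in auto)
    moreover have "restrict (\<lambda>p. p) P \<in> topspace Y" unfolding topY using P(1) \<eta> by auto
    ultimately show False unfolding cover by simp
  qed
  then obtain N s0 where s0: "s0 \<in> Y interior_of Q N" by blast
  then obtain W where W: "openin Y W" "s0 \<in> W" "W \<subseteq> Q N" unfolding interior_of_def by blast
  obtain V where V: "\<forall>p\<in>P. openin (top_of_set (X \<inter> ball p \<eta>)) (V p)" "s0 \<in> PiE P V" "PiE P V \<subseteq> W"
    using W(1,2) unfolding Y_def openin_product_topology_alt by blast
  have "\<exists>\<rho>>0. \<forall>y\<in>X. dist y (s0 p) < \<rho> \<longrightarrow> y \<in> V p" if p: "p \<in> P" for p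
  proof -
    have sp: "s0 p \<in> V p" using V(2) p by auto
    have Vp: "V p \<subseteq> X \<inter> ball p \<eta>" "\<forall>x\<in>V p. \<exists>e>0. \<forall>x'\<in>X \<inter> ball p \<eta>. dist x' x < e \<longrightarrow> x' \<in> V p"
      using V(1) p unfolding openin_euclidean_subtopology_iff by blast+
    obtain e1 where e1: "e1 > 0" "\<forall>x'\<in>X \<inter> ball p \<eta>. dist x' (s0 p) < e1 \<longrightarrow> x' \<in> V p"
      using Vp(2) sp by blast
    have sb: "dist p (s0 p) < \<eta>" using Vp(1) sp by auto
    show ?thesis
    proof (intro exI[of _ "min e1 (\<eta> - dist p (s0 p))"] conjI ballI impI)
      show "min e1 (\<eta> - dist p (s0 p)) > 0" using e1 sb by simp
      fix y assume y: "y \<in> X" "dist y (s0 p) < min e1 (\<eta> - dist p (s0 p))"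
      have "dist p y \<le> dist p (s0 p) + dist (s0 p) y" by (rule dist_triangle)
      then have "y \<in> ball p \<eta>" using y(2) by (simp add: dist_commute)
      then show "y \<in> V p" using e1(2) y by auto
    qed
  qed
  then obtain \<rho> where \<rho>: "\<And>p. p \<in> P \<Longrightarrow> \<rho> p > 0" "\<And>p y. p \<in> P \<Longrightarrow> y \<in> X \<Longrightarrow> dist y (s0 p) < \<rho> p \<Longrightarrow> y \<in> V p"
    by metis
  define \<delta> where "\<delta> = Min (\<rho> ` P)"
  have \<delta>: "\<delta> > 0" unfolding \<delta>_def using P(2) Pne \<rho>(1) by (simp add: Min_gr_iff)
  have \<delta>le: "\<delta> \<le> \<rho> p" if "p \<in> P" for p unfolding \<delta>_def using P(2) that by simp
  have s0X: "s0 p \<in> X" if "p \<in> P" for p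
  proof -
    have "s0 p \<in> V p" using V(2) that by auto
    moreover have "V p \<subseteq> X \<inter> ball p \<eta>" using V(1) that unfolding openin_euclidean_subtopology_iff by blast
    ultimately show ?thesis by blast
  qed
  show ?thesis
  proof (intro exI[of _ N] exI[of _ \<delta>] conjI ballI impI allI \<delta>)
    fix S n assume S: "S \<in> KX X" "hausdorff_dist S X < \<delta>" and n: "N \<le> n"
    have "\<exists>y\<in>S. dist (s0 p) y < \<delta>" if p: "p \<in> P" for p
    proof -
      have "infdist (s0 p) S < \<delta>" using S hdX_lt[OF X(1) S(1) \<delta>] s0X[OF p] by blast
      then show ?thesis using infdist_lessE KXD[OF S(1)] by metis
    qed
    then obtain t where t: "\<And>p. p \<in> P \<Longrightarrow> t p \<in> S \<and> dist (s0 p) (t p) < \<delta>" by metis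
    define t' where "t' = restrict t P"
    have "t' \<in> PiE P V"
    proof -
      have "t p \<in> V p" if p: "p \<in> P" for p
      proof (rule \<rho>(2)[OF p])
        show "t p \<in> X" using t[OF p] KXD[OF S(1)] by blast
        show "dist (t p) (s0 p) < \<rho> p" using t[OF p] \<delta>le[OF p] by (simp add: dist_commute)
      qed
      then show ?thesis unfolding t'_def by auto
    qed
    then have t'Q: "t' \<in> Q N" using V(3) W(3) by blast
    then have t'Y: "t' \<in> topspace Y" unfolding Q_def by blast
    have img: "t' ` P = t ` P" unfolding t'_def by auto
    have sub: "t' ` P \<subseteq> S" unfolding img using t by auto
    have tK: "t' ` P \<in> KX X" using sK[OF t'Y] .
    have m: "(F ^^ n) (t' ` P) \<subseteq> (F ^^ n) S" using iter_mono[OF F(1,3) tK S(1) sub] .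
    have le: "hausdorff_dist ((F ^^ n) (t' ` P)) X \<le> e" using t'Q n unfolding Q_def by blast
    have AK: "(F ^^ n) (t' ` P) \<in> KX X" using iter_KX[OF F(1) tK] .
    have BK: "(F ^^ n) S \<in> KX X" using iter_KX[OF F(1) S(1)] .
    show "hausdorff_dist ((F ^^ n) S) X \<le> e"
      unfolding hdX_le[OF X(1) BK less_imp_le[OF e]]
    proof
      fix x assume x: "x \<in> X"
      have "infdist x ((F ^^ n) S) \<le> infdist x ((F ^^ n) (t' ` P))"
        using infdist_mono[OF m] KXD[OF AK] by blast
      also have "\<dots> \<le> hausdorff_dist ((F ^^ n) (t' ` P)) X"
        using infdist_le_hd KXD[OF AK] X x by blast
      finally show "infdist x ((F ^^ n) S) \<le> e" using le by linarith
    qed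
  qed
qed



lemma part1:
  assumes X: "compact X" "X \<noteq> {}" and F: "KX_map X F" "KX_continuous X F" "KX_monotone X F"
    and att: "attractor X F X"
  shows "asymptotically_stable X F X"
  unfolding asymptotically_stable_def
proof (intro conjI allI impI att)
  fix \<epsilon> :: real assume e: "\<epsilon> > 0"
  have e2: "\<epsilon>/2 > 0" using e by simp
  obtain N d1 where d1: "d1 > 0" "\<forall>S\<in>KX X. hausdorff_dist S X < d1 \<longrightarrow> (\<forall>n\<ge>N. hausdorff_dist ((F ^^ n) S) X \<le> \<epsilon>/2)"
    using tail[OF X F att e2] by blast
  obtain d2 where d2: "d2 > 0" "\<forall>n<N. \<forall>S\<in>KX X. hausdorff_dist S X < d2 \<longrightarrow> hausdorff_dist ((F ^^ n) S) X < \<epsilon>"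
    using head[OF X(1) F att e, of N] by blast
  show "\<exists>\<delta>>0. \<forall>n. \<forall>S\<in>KX X. hausdorff_dist S X < \<delta> \<longrightarrow> hausdorff_dist ((F ^^ n) S) X < \<epsilon>"
  proof (intro exI[of _ "min d1 d2"] conjI allI ballI impI)
    show "min d1 d2 > 0" using d1 d2 by simp
    fix n S assume S: "S \<in> KX X" "hausdorff_dist S X < min d1 d2"
    show "hausdorff_dist ((F ^^ n) S) X < \<epsilon>"
    proof (cases "n < N")
      case True then show ?thesis using d2(2) S by auto
    next
      case False
      then have "hausdorff_dist ((F ^^ n) S) X \<le> \<epsilon>/2" using d1(2) S by simp
      then show ?thesis using e by linarith
    qed
  qed
qed

lemma hut_KX:
  assumes "finite Fs" "Fs \<noteq> {}" "\<forall>f\<in>Fs. continuous_on X f \<and> f ` X \<subseteq> X" "S \<in> KX X"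
  shows "hutchinson Fs S \<in> KX X"
proof -
  have S: "compact S" "S \<noteq> {}" "S \<subseteq> X" using KXD[OF assms(4)] by auto
  have "compact (f ` S)" if "f \<in> Fs" for f
  proof (rule compact_continuous_image[OF _ S(1)])
    show "continuous_on S f" using assms(3) that S(3) continuous_on_subset by blast
  qed
  then have "compact (\<Union>f\<in>Fs. f ` S)" using assms(1) by (intro compact_UN) auto
  moreover have "(\<Union>f\<in>Fs. f ` S) \<noteq> {}" using assms(2) S(2) by auto
  moreover have "(\<Union>f\<in>Fs. f ` S) \<subseteq> X" using assms(3) S(3) by blast
  ultimately show ?thesis unfolding KX_def hutchinson_def by blast
qed

lemma hut_cont:
  assumes X: "compact X" and "finite Fs" "Fs \<noteq> {}" "\<forall>f\<in>Fs. continuous_on X f \<and> f ` X \<subseteq> X"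
  shows "KX_continuous X (hutchinson Fs)"
  unfolding KX_continuous_def
proof (intro ballI allI impI)
  fix S and e :: real assume S: "S \<in> KX X" and e: "e > 0"
  have e2: "e/2 > 0" using e by simp
  have "\<exists>d>0. \<forall>x\<in>X. \<forall>x'\<in>X. dist x' x < d \<longrightarrow> dist (f x') (f x) < e/2" if "f \<in> Fs" for f
  proof -
    have "continuous_on X f" using assms(4) that by blast
    then have "uniformly_continuous_on X f" using X by (intro compact_uniformly_continuous)
    then show ?thesis unfolding uniformly_continuous_on_def using e2 by blast
  qed
  then have "\<forall>f\<in>Fs. \<exists>d. d > 0 \<and> (\<forall>x\<in>X. \<forall>x'\<in>X. dist x' x < d \<longrightarrow> dist (f x') (f x) < e/2)" by blast
  then obtain d where dd: "\<forall>f\<in>Fs. d f > 0 \<and> (\<forall>x\<in>X. \<forall>x'\<in>X. dist x' x < d f \<longrightarrow> dist (f x') (f x) < e/2)"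
    by (rule bchoice[THEN exE]) blast
  have d: "\<And>f. f \<in> Fs \<Longrightarrow> d f > 0"
    "\<And>f x x'. f \<in> Fs \<Longrightarrow> x \<in> X \<Longrightarrow> x' \<in> X \<Longrightarrow> dist x' x < d f \<Longrightarrow> dist (f x') (f x) < e/2"
    using dd by blast+
  define \<delta> where "\<delta> = Min (d ` Fs)"
  have \<delta>: "\<delta> > 0" unfolding \<delta>_def using assms(2,3) d(1) by (simp add: Min_gr_iff)
  have \<delta>le: "\<delta> \<le> d f" if "f \<in> Fs" for f unfolding \<delta>_def using assms(2) that by simp
  show "\<exists>d>0. \<forall>T\<in>KX X. hausdorff_dist T S < d \<longrightarrow> hausdorff_dist (hutchinson Fs T) (hutchinson Fs S) < e"
  proof (intro exI[of _ \<delta>] conjI ballI impI \<delta>)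
    fix T assume T: "T \<in> KX X" "hausdorff_dist T S < \<delta>"
    have TK: "compact T" "T \<noteq> {}" "T \<subseteq> X" and SK: "compact S" "S \<noteq> {}" "S \<subseteq> X"
      using KXD[OF T(1)] KXD[OF S] by auto
    have near: "infdist a (hutchinson Fs B) < e"
      if pr: "a \<in> hutchinson Fs A" "A \<subseteq> X" "B \<subseteq> X" "B \<noteq> {}" "\<forall>z\<in>A. infdist z B < \<delta>" for A B a
    proof -
      obtain f z where fz: "f \<in> Fs" "z \<in> A" "a = f z" using pr(1) unfolding hutchinson_def by blast
      obtain y where y: "y \<in> B" "dist z y < \<delta>" using infdist_lessE[of z B \<delta>] pr(4,5) fz(2) by blast
      have "dist (f z) (f y) < e/2"
        using d(2)[OF fz(1), of y z] y fz(2) pr(2,3) \<delta>le[OF fz(1)] by (auto simp: dist_commute)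
      moreover have "f y \<in> hutchinson Fs B" using fz(1) y(1) unfolding hutchinson_def by blast
      then have "infdist a (hutchinson Fs B) \<le> dist a (f y)" by (rule infdist_le)
      moreover have "dist a (f y) < e/2" using \<open>dist (f z) (f y) < e/2\<close> fz(3) by simp
      ultimately show ?thesis using e by linarith
    qed
    have hT: "hutchinson Fs T \<in> KX X" and hS: "hutchinson Fs S \<in> KX X"
      using hut_KX assms(2-4) T(1) S by blast+
    have c1: "\<forall>z\<in>T. infdist z S < \<delta>" and c2: "\<forall>z\<in>S. infdist z T < \<delta>"
      using T(2) hd_lt[OF TK(1,2) SK(1,2)] by blast+
    have n1: "\<forall>a\<in>hutchinson Fs T. infdist a (hutchinson Fs S) < e"
      using near[OF _ TK(3) SK(3) SK(2) c1] by blast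
    have n2: "\<forall>a\<in>hutchinson Fs S. infdist a (hutchinson Fs T) < e"
      using near[OF _ SK(3) TK(3) TK(2) c2] by blast
    have hTK: "compact (hutchinson Fs T)" "hutchinson Fs T \<noteq> {}" using KXD[OF hT] by auto
    have hSK: "compact (hutchinson Fs S)" "hutchinson Fs S \<noteq> {}" using KXD[OF hS] by auto
    show "hausdorff_dist (hutchinson Fs T) (hutchinson Fs S) < e"
      using hd_lt[OF hTK hSK, of e] n1 n2 by simp
  qed
qed

theorem theoremD:
  fixes X :: "'a::metric_space set"
  assumes "compact X" and "X \<noteq> {}"
  shows "(\<forall>F. KX_map X F \<and> KX_continuous X F \<and> KX_monotone X F \<and> attractor X F X
            \<longrightarrow> asymptotically_stable X F X)
       \<and> (\<forall>Fs. finite Fs \<and> Fs \<noteq> {} \<and> (\<forall>f\<in>Fs. continuous_on X f \<and> f ` X \<subseteq> X)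
            \<and> strict_attractor X (hutchinson Fs) X
            \<longrightarrow> asymptotically_stable X (hutchinson Fs) X)"
proof (intro conjI allI impI)
  fix F assume h: "KX_map X F \<and> KX_continuous X F \<and> KX_monotone X F \<and> attractor X F X"
  then have "KX_map X F" "KX_continuous X F" "KX_monotone X F" "attractor X F X" by simp_all
  then show "asymptotically_stable X F X" by (rule part1[OF assms])
next
  fix Fs assume h: "finite Fs \<and> Fs \<noteq> {} \<and> (\<forall>f\<in>Fs. continuous_on X f \<and> f ` X \<subseteq> X)
            \<and> strict_attractor X (hutchinson Fs) X"
  then have h1: "finite Fs" and h2: "Fs \<noteq> {}" and h3: "\<forall>f\<in>Fs. continuous_on X f \<and> f ` X \<subseteq> X"
    and h4: "strict_attractor X (hutchinson Fs) X" by simp_all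
  have m: "KX_map X (hutchinson Fs)" unfolding KX_map_def
    using hut_KX[OF h1 h2 h3] by blast
  have c: "KX_continuous X (hutchinson Fs)" by (rule hut_cont[OF assms(1) h1 h2 h3])
  have mo: "KX_monotone X (hutchinson Fs)" unfolding KX_monotone_def hutchinson_def by blast
  from h4 obtain U where U: "X \<in> KX X" "openin (top_of_set X) U" "X \<subseteq> U"
      "\<forall>S. S \<subseteq> U \<and> compact S \<and> S \<noteq> {} \<longrightarrow> (\<lambda>n. hausdorff_dist ((hutchinson Fs ^^ n) S) X) \<longlonglongrightarrow> 0"
    unfolding strict_attractor_def by blast
  have "attractor X (hutchinson Fs) X"
    unfolding attractor_def
  proof (intro conjI exI[of _ "KX X"] U(1) ballI)
    show "KX_open X (KX X)" unfolding KX_open_def using zero_less_one by blast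
    fix C assume "C \<in> KX X"
    then have "compact C" "C \<noteq> {}" "C \<subseteq> U" using KXD U(3) by blast+
    then show "(\<lambda>n. hausdorff_dist ((hutchinson Fs ^^ n) C) X) \<longlonglongrightarrow> 0"
      using U(4) by blast
  qed
  then show "asymptotically_stable X (hutchinson Fs) X" by (rule part1[OF assms m c mo])
qed


end
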